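(* Let $N\subseteq QI(\mathbb{R}_{+})$ be the set of classes $[f]$ of quasi-isometries $f$ of $\mathbb{R}_+$ satisfying $\lim_{x\to\infty} f(x)/x=1$. Then $N$ is a normal subgroup of $QI(\mathbb{R}_{+})$ and the center of the quotient group $QI(\mathbb{R}_{+})/N$ is trivial.
   Context: $\mathbb{R}_+=[0,\infty)$ with the Euclidean metric $d$. A quasi-isometry of a metric space $(X,d)$ is a map $f:X\to X$ for which there are constants $\mu\ge1$, $\delta>0$, $M>0$ with $\mu^{-1}d(x,y)-\delta\le d(f(x),f(y))\le \mu d(x,y)+\delta$ for all $x,y\in X$ and every point of $X$ within distance $M$ of $f(X)$. Two maps $f,g:X\to X$ are equivalent if $\sup_x d(f(x),g(x))<\infty$; $[f]$ denotes the class of $f$, and $QI(X)$ is the group of classes of quasi-isometries of $X$ under $[f][g]=[f\circ g]$. (The condition $\lim f(x)/x=1$ depends only on the class $[f]$.) *)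

theory Defs
  imports "HOL-Analysis.Analysis" "HOL-Algebra.Algebra"
begin

text \<open>Maps of R+ = [0,inf) are modelled as functions real => real; only their
  values on [0,inf) matter, and they must map [0,inf) into [0,inf).\<close>

definition rplus_map :: "(real \<Rightarrow> real) \<Rightarrow> bool" where
  "rplus_map f \<longleftrightarrow> (\<forall>x\<ge>0. f x \<ge> 0)"

definition is_qi :: "(real \<Rightarrow> real) \<Rightarrow> bool" where
  "is_qi f \<longleftrightarrow> rplus_map f \<and>
     (\<exists>\<mu> \<delta> M. \<mu> \<ge> 1 \<and> \<delta> > 0 \<and> M > 0 \<and>
        (\<forall>x\<ge>0. \<forall>y\<ge>0. dist x y / \<mu> - \<delta> \<le> dist (f x) (f y) \<and>
                       dist (f x) (f y) \<le> \<mu> * dist x y + \<delta>) \<and>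
        (\<forall>y\<ge>0. \<exists>x\<ge>0. dist y (f x) \<le> M))"

definition qi_equiv :: "(real \<Rightarrow> real) \<Rightarrow> (real \<Rightarrow> real) \<Rightarrow> bool" where
  "qi_equiv f g \<longleftrightarrow> (\<exists>C. \<forall>x\<ge>0. dist (f x) (g x) \<le> C)"

definition qi_class :: "(real \<Rightarrow> real) \<Rightarrow> (real \<Rightarrow> real) set" where
  "qi_class f = {g. rplus_map g \<and> qi_equiv f g}"

definition QI_Rplus :: "(real \<Rightarrow> real) set monoid" where
  "QI_Rplus = \<lparr> carrier = qi_class ` {f. is_qi f},
                mult = (\<lambda>A B. qi_class ((SOME f. f \<in> A) \<circ> (SOME g. g \<in> B))),
                one = qi_class id \<rparr>"

definition N_Rplus :: "(real \<Rightarrow> real) set set" where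
  "N_Rplus = {qi_class f | f. is_qi f \<and> ((\<lambda>x. f x / x) \<longlongrightarrow> 1) at_top}"

definition group_center :: "('a, 'b) monoid_scheme \<Rightarrow> 'a set" where
  "group_center G = {z \<in> carrier G. \<forall>x \<in> carrier G. z \<otimes>\<^bsub>G\<^esub> x = x \<otimes>\<^bsub>G\<^esub> z}"

end

theory Submission
  imports Defs
begin

lemma qi_equiv_refl: "qi_equiv f f"
  unfolding qi_equiv_def by (rule exI[of _ 0]) simp

lemma qi_equiv_sym: "qi_equiv f g \<Longrightarrow> qi_equiv g f"
  unfolding qi_equiv_def by (simp add: dist_commute)

lemma qi_equiv_trans: "qi_equiv f g \<Longrightarrow> qi_equiv g h \<Longrightarrow> qi_equiv f h"
  unfolding qi_equiv_def
proof (elim exE)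
  fix C D assume C: "\<forall>x\<ge>0. dist (f x) (g x) \<le> C" and D: "\<forall>x\<ge>0. dist (g x) (h x) \<le> D"
  show "\<exists>C. \<forall>x\<ge>0. dist (f x) (h x) \<le> C"
  proof (rule exI[of _ "C + D"], intro allI impI)
    fix x :: real assume "x \<ge> 0"
    then show "dist (f x) (h x) \<le> C + D"
      using C D dist_triangle[of "f x" "h x" "g x"] by force
  qed
qed

lemma qi_class_cong: "qi_equiv f g \<Longrightarrow> qi_class f = qi_class g"
  unfolding qi_class_def using qi_equiv_trans qi_equiv_sym by blast

lemma qi_class_self: "rplus_map f \<Longrightarrow> f \<in> qi_class f"
  unfolding qi_class_def using qi_equiv_refl by blast

lemma qi_class_mem: "g \<in> qi_class f \<Longrightarrow> rplus_map g \<and> qi_equiv f g"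
  unfolding qi_class_def by blast

lemma some_class: "rplus_map f \<Longrightarrow> rplus_map (SOME g. g \<in> qi_class f) \<and> qi_equiv f (SOME g. g \<in> qi_class f)"
  by (metis qi_class_mem qi_class_self someI_ex)

lemma is_qi_rplus: "is_qi f \<Longrightarrow> rplus_map f"
  unfolding is_qi_def by blast

lemma rplusD: "rplus_map f \<Longrightarrow> x \<ge> 0 \<Longrightarrow> f x \<ge> 0"
  unfolding rplus_map_def by blast

lemma is_qiE:
  assumes "is_qi f"
  obtains \<mu> \<delta> M where "\<mu> \<ge> 1" "\<delta> > 0" "M > 0"
    "\<And>x y. x \<ge> 0 \<Longrightarrow> y \<ge> 0 \<Longrightarrow> dist x y / \<mu> - \<delta> \<le> dist (f x) (f y)"
    "\<And>x y. x \<ge> 0 \<Longrightarrow> y \<ge> 0 \<Longrightarrow> dist (f x) (f y) \<le> \<mu> * dist x y + \<delta>"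
    "\<And>y. y \<ge> 0 \<Longrightarrow> \<exists>x\<ge>0. dist y (f x) \<le> M"
  using assms unfolding is_qi_def by blast

lemma comp_equiv:
  assumes f: "is_qi f" and ff: "qi_equiv f f'" and gg: "qi_equiv g g'"
    and g: "rplus_map g" and g': "rplus_map g'"
  shows "qi_equiv (f \<circ> g) (f' \<circ> g')"
proof -
  obtain \<mu> \<delta> M where mu: "\<mu> \<ge> 1" and
    up: "\<And>x y. x \<ge> 0 \<Longrightarrow> y \<ge> 0 \<Longrightarrow> dist (f x) (f y) \<le> \<mu> * dist x y + \<delta>"
    using is_qiE[OF f] by metis
  obtain C where C: "\<forall>x\<ge>0. dist (f x) (f' x) \<le> C" using ff unfolding qi_equiv_def by blast
  obtain D where D: "\<forall>x\<ge>0. dist (g x) (g' x) \<le> D" using gg unfolding qi_equiv_def by blast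
  show ?thesis unfolding qi_equiv_def
  proof (rule exI[of _ "\<mu> * D + \<delta> + C"], intro allI impI)
    fix x :: real assume x: "x \<ge> 0"
    have a: "g x \<ge> 0" "g' x \<ge> 0" using g g' x rplusD by auto
    have "dist (f (g x)) (f (g' x)) \<le> \<mu> * D + \<delta>"
      using up[OF a] D x mu by (smt (verit) mult_left_mono)
    moreover have "dist (f (g' x)) (f' (g' x)) \<le> C" using C a by auto
    ultimately show "dist ((f \<circ> g) x) ((f' \<circ> g') x) \<le> \<mu> * D + \<delta> + C"
      using dist_triangle[of "f (g x)" "f' (g' x)" "f (g' x)"] by simp
  qed
qed

lemma mult_class:
  assumes "is_qi f" "is_qi g"
  shows "qi_class f \<otimes>\<^bsub>QI_Rplus\<^esub> qi_class g = qi_class (f \<circ> g)"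
proof -
  let ?a = "SOME h. h \<in> qi_class f" and ?b = "SOME h. h \<in> qi_class g"
  have a: "rplus_map ?a" "qi_equiv f ?a" using some_class is_qi_rplus assms by blast+
  have b: "rplus_map ?b" "qi_equiv g ?b" using some_class is_qi_rplus assms by blast+
  have "qi_equiv (f \<circ> g) (?a \<circ> ?b)"
    by (rule comp_equiv[OF assms(1) a(2) b(2) is_qi_rplus[OF assms(2)] b(1)])
  then show ?thesis unfolding QI_Rplus_def using qi_class_cong by (simp add: qi_class_cong)
qed


lemma is_qi_id: "is_qi id"
proof -
  have A: "\<forall>x::real\<ge>0. \<forall>y::real\<ge>0. dist x y / 1 - 1 \<le> dist (id x) (id y) \<and> dist (id x) (id y) \<le> 1 * dist x y + 1"
    by simp
  have Bf: "\<forall>y::real\<ge>0. \<exists>x\<ge>0. dist y (id x) \<le> (1::real)"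
  proof (intro allI impI)
    fix y :: real assume y: "y \<ge> 0" show "\<exists>x\<ge>0. dist y (id x) \<le> 1" by (rule exI[of _ y]) (simp add: y)
  qed
  show ?thesis unfolding is_qi_def rplus_map_def
    by (intro conjI exI[of _ "1::real"]) (use A Bf in simp_all)
qed

lemma is_qi_comp:
  assumes f: "is_qi f" and g: "is_qi g"
  shows "is_qi (f \<circ> g)"
proof -
  from f obtain \<mu>1 \<delta>1 M1 where H1: "\<mu>1 \<ge> 1 \<and> \<delta>1 > 0 \<and> M1 > 0 \<and> (\<forall>x\<ge>0. \<forall>y\<ge>0. dist x y / \<mu>1 - \<delta>1 \<le> dist (f x) (f y) \<and> dist (f x) (f y) \<le> \<mu>1 * dist x y + \<delta>1) \<and> (\<forall>y\<ge>0. \<exists>x\<ge>0. dist y (f x) \<le> M1)"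
    unfolding is_qi_def by blast
  then have m1: "\<mu>1 \<ge> 1" "\<delta>1 > 0" "M1 > 0" by auto
  have lo1: "\<And>x y. x \<ge> 0 \<Longrightarrow> y \<ge> 0 \<Longrightarrow> dist x y / \<mu>1 - \<delta>1 \<le> dist (f x) (f y)" using H1 by blast
  have up1: "\<And>x y. x \<ge> 0 \<Longrightarrow> y \<ge> 0 \<Longrightarrow> dist (f x) (f y) \<le> \<mu>1 * dist x y + \<delta>1" using H1 by blast
  have s1: "\<And>y. y \<ge> 0 \<Longrightarrow> \<exists>x\<ge>0. dist y (f x) \<le> M1" using H1 by blast
  from g obtain \<mu>2 \<delta>2 M2 where H2: "\<mu>2 \<ge> 1 \<and> \<delta>2 > 0 \<and> M2 > 0 \<and> (\<forall>x\<ge>0. \<forall>y\<ge>0. dist x y / \<mu>2 - \<delta>2 \<le> dist (g x) (g y) \<and> dist (g x) (g y) \<le> \<mu>2 * dist x y + \<delta>2) \<and> (\<forall>y\<ge>0. \<exists>x\<ge>0. dist y (g x) \<le> M2)"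
    unfolding is_qi_def by blast
  then have m2: "\<mu>2 \<ge> 1" "\<delta>2 > 0" "M2 > 0" by auto
  have lo2: "\<And>x y. x \<ge> 0 \<Longrightarrow> y \<ge> 0 \<Longrightarrow> dist x y / \<mu>2 - \<delta>2 \<le> dist (g x) (g y)" using H2 by blast
  have up2: "\<And>x y. x \<ge> 0 \<Longrightarrow> y \<ge> 0 \<Longrightarrow> dist (g x) (g y) \<le> \<mu>2 * dist x y + \<delta>2" using H2 by blast
  have s2: "\<And>y. y \<ge> 0 \<Longrightarrow> \<exists>x\<ge>0. dist y (g x) \<le> M2" using H2 by blast
  have gp: "\<And>x. x \<ge> 0 \<Longrightarrow> g x \<ge> 0" using g is_qi_rplus rplusD by blast
  have fp: "\<And>x. x \<ge> 0 \<Longrightarrow> f x \<ge> 0" using f is_qi_rplus rplusD by blast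
  have lo: "dist x y / (\<mu>1 * \<mu>2) - (\<mu>1 * \<delta>2 + \<delta>1) \<le> dist (f (g x)) (f (g y))"
    if "x \<ge> 0" "y \<ge> 0" for x y
  proof -
    have A: "dist (g x) (g y) / \<mu>1 - \<delta>1 \<le> dist (f (g x)) (f (g y))" by (rule lo1[OF gp[OF that(1)] gp[OF that(2)]])
    have B: "(dist x y / \<mu>2 - \<delta>2) / \<mu>1 \<le> dist (g x) (g y) / \<mu>1"
      using lo2[OF that] m1 by (intro divide_right_mono) auto
    have C: "(dist x y / \<mu>2 - \<delta>2) / \<mu>1 = dist x y / (\<mu>1 * \<mu>2) - \<delta>2 / \<mu>1"
      using m1 m2 by (simp add: field_simps)
    have D: "\<delta>2 / \<mu>1 \<le> \<mu>1 * \<delta>2"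
    proof -
      have "\<delta>2 / \<mu>1 \<le> \<delta>2" using m1 m2 by (simp add: divide_le_eq)
      also have "\<delta>2 \<le> \<mu>1 * \<delta>2" using m1 m2 by simp
      finally show ?thesis .
    qed
    show ?thesis using A B C D by linarith
  qed
  have up: "dist (f (g x)) (f (g y)) \<le> (\<mu>1 * \<mu>2) * dist x y + (\<mu>1 * \<delta>2 + \<delta>1)"
    if "x \<ge> 0" "y \<ge> 0" for x y
  proof -
    have A: "dist (f (g x)) (f (g y)) \<le> \<mu>1 * dist (g x) (g y) + \<delta>1" by (rule up1[OF gp[OF that(1)] gp[OF that(2)]])
    have B: "\<mu>1 * dist (g x) (g y) \<le> \<mu>1 * (\<mu>2 * dist x y + \<delta>2)"
      using up2[OF that] m1 by (intro mult_left_mono) auto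
    show ?thesis using A B by (simp add: algebra_simps)
  qed
  have su: "\<exists>x\<ge>0. dist y (f (g x)) \<le> M1 + \<mu>1 * M2 + \<delta>1" if "y \<ge> 0" for y
  proof -
    from s1[OF that] obtain x where x: "x \<ge> 0" "dist y (f x) \<le> M1" by (elim exE conjE)
    from s2[OF x(1)] obtain z where z: "z \<ge> 0" "dist x (g z) \<le> M2" by (elim exE conjE)
    have "dist (f x) (f (g z)) \<le> \<mu>1 * dist x (g z) + \<delta>1" by (rule up1[OF x(1) gp[OF z(1)]])
    also have "\<dots> \<le> \<mu>1 * M2 + \<delta>1" using z m1 by (simp add: mult_left_mono)
    finally have "dist (f x) (f (g z)) \<le> \<mu>1 * M2 + \<delta>1" .
    then have "dist y (f (g z)) \<le> M1 + \<mu>1 * M2 + \<delta>1" using x dist_triangle[of y "f (g z)" "f x"] by linarith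
    then show ?thesis using z(1) by blast
  qed
  have "1 * 1 \<le> \<mu>1 * \<mu>2" using m1 m2 by (intro mult_mono) auto
  then have "\<mu>1 * \<mu>2 \<ge> 1" by simp
  moreover have "\<mu>1 * \<delta>2 + \<delta>1 > 0" using m1 m2 by (simp add: add_pos_pos)
  moreover have "M1 + \<mu>1 * M2 + \<delta>1 > 0" using m1 m2 by (simp add: add_pos_pos)
  moreover have "\<forall>x\<ge>0. \<forall>y\<ge>0. dist x y / (\<mu>1 * \<mu>2) - (\<mu>1 * \<delta>2 + \<delta>1) \<le> dist ((f \<circ> g) x) ((f \<circ> g) y) \<and>
       dist ((f \<circ> g) x) ((f \<circ> g) y) \<le> (\<mu>1 * \<mu>2) * dist x y + (\<mu>1 * \<delta>2 + \<delta>1)"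
    using lo up unfolding o_def by blast
  moreover have "\<forall>y\<ge>0. \<exists>x\<ge>0. dist y ((f \<circ> g) x) \<le> M1 + \<mu>1 * M2 + \<delta>1"
    using su unfolding o_def by blast
  moreover have "\<forall>x\<ge>0. (f \<circ> g) x \<ge> 0" using fp gp by simp
  ultimately show ?thesis unfolding is_qi_def rplus_map_def by blast
qed


definition qinv :: "(real \<Rightarrow> real) \<Rightarrow> real \<Rightarrow> real \<Rightarrow> real" where
  "qinv f M y = (if y \<ge> 0 then SOME x. x \<ge> 0 \<and> dist y (f x) \<le> M else 0)"

lemma quasi_inverse:
  assumes f: "is_qi f"
  shows "\<exists>h. is_qi h \<and> qi_equiv (h \<circ> f) id \<and> qi_equiv (f \<circ> h) id"
proof -
  from f obtain \<mu> \<delta> M where H: "\<mu> \<ge> 1 \<and> \<delta> > 0 \<and> M > 0 \<and> (\<forall>x\<ge>0. \<forall>y\<ge>0. dist x y / \<mu> - \<delta> \<le> dist (f x) (f y) \<and> dist (f x) (f y) \<le> \<mu> * dist x y + \<delta>) \<and> (\<forall>y\<ge>0. \<exists>x\<ge>0. dist y (f x) \<le> M)"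
    unfolding is_qi_def by blast
  then have m: "\<mu> \<ge> 1" "\<delta> > 0" "M > 0" by auto
  have lo: "\<And>x y. x \<ge> 0 \<Longrightarrow> y \<ge> 0 \<Longrightarrow> dist x y / \<mu> - \<delta> \<le> dist (f x) (f y)" using H by blast
  have up: "\<And>x y. x \<ge> 0 \<Longrightarrow> y \<ge> 0 \<Longrightarrow> dist (f x) (f y) \<le> \<mu> * dist x y + \<delta>" using H by blast
  have s: "\<And>y. y \<ge> 0 \<Longrightarrow> \<exists>x\<ge>0. dist y (f x) \<le> M" using H by blast
  have fp: "\<And>x. x \<ge> 0 \<Longrightarrow> f x \<ge> 0" using f is_qi_rplus rplusD by blast
  define h where "h = qinv f M"
  have hp: "h y \<ge> 0 \<and> dist y (f (h y)) \<le> M" if "y \<ge> 0" for y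
  proof -
    have "\<exists>x. x \<ge> 0 \<and> dist y (f x) \<le> M" using s[OF that] by blast
    from someI_ex[OF this] show ?thesis unfolding h_def qinv_def using that by simp
  qed
  have bck: "dist x (h (f x)) \<le> \<mu> * (M + \<delta>)" if "x \<ge> 0" for x
  proof -
    have a: "h (f x) \<ge> 0" "dist (f x) (f (h (f x))) \<le> M" using hp fp that by auto
    have "dist x (h (f x)) / \<mu> \<le> M + \<delta>" using lo[OF that a(1)] a(2) by linarith
    then show ?thesis using m by (simp add: divide_le_eq mult.commute)
  qed
  have hlo: "dist y y' / \<mu> - (\<mu> * (2 * M + \<delta>) + 1) \<le> dist (h y) (h y')"
    if "y \<ge> 0" "y' \<ge> 0" for y y'
  proof -
    have a: "h y \<ge> 0" "dist y (f (h y)) \<le> M" "h y' \<ge> 0" "dist y' (f (h y')) \<le> M" using hp that by auto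
    have "dist y y' \<le> dist (f (h y)) (f (h y')) + 2 * M"
      using a dist_triangle[of y y' "f (h y)"] dist_triangle[of "f (h y)" y' "f (h y')"]
      by (simp add: dist_commute)
    also have "\<dots> \<le> \<mu> * dist (h y) (h y') + \<delta> + 2 * M" using up a by force
    finally have "dist y y' / \<mu> \<le> (\<mu> * dist (h y) (h y') + (\<delta> + 2 * M)) / \<mu>"
      using m by (intro divide_right_mono) auto
    also have "\<dots> = dist (h y) (h y') + (\<delta> + 2 * M) / \<mu>" using m by (simp add: field_simps)
    also have "(\<delta> + 2 * M) / \<mu> \<le> \<delta> + 2 * M" using m by (simp add: divide_le_eq)
    also have "\<delta> + 2 * M \<le> \<mu> * (2 * M + \<delta>)"
    proof -
      have "1 * (2 * M + \<delta>) \<le> \<mu> * (2 * M + \<delta>)" using m by (intro mult_right_mono) auto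
      then show ?thesis by simp
    qed
    finally show ?thesis by linarith
  qed
  have hup: "dist (h y) (h y') \<le> \<mu> * dist y y' + (\<mu> * (2 * M + \<delta>) + 1)"
    if "y \<ge> 0" "y' \<ge> 0" for y y'
  proof -
    have a: "h y \<ge> 0" "dist y (f (h y)) \<le> M" "h y' \<ge> 0" "dist y' (f (h y')) \<le> M" using hp that by auto
    have "dist (f (h y)) (f (h y')) \<le> dist y y' + 2 * M"
      using a dist_triangle[of "f (h y)" "f (h y')" y] dist_triangle[of y "f (h y')" y']
      by (simp add: dist_commute)
    then have "dist (h y) (h y') / \<mu> \<le> dist y y' + 2 * M + \<delta>" using lo[OF a(1) a(3)] by linarith
    then have "dist (h y) (h y') \<le> \<mu> * (dist y y' + 2 * M + \<delta>)" using m by (simp add: divide_le_eq mult.commute)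
    then show ?thesis by (simp add: algebra_simps)
  qed
  have hs: "\<exists>x\<ge>0. dist y (h x) \<le> \<mu> * (M + \<delta>) + 1" if "y \<ge> 0" for y
    using bck[OF that] fp[OF that] by (intro exI[of _ "f y"]) auto
  have "is_qi h" unfolding is_qi_def rplus_map_def
  proof (intro conjI)
    show "\<forall>x\<ge>0. 0 \<le> h x" using hp by blast
    have "\<mu> * (2 * M + \<delta>) + 1 > 0" "\<mu> * (M + \<delta>) + 1 > 0" using m by (simp_all add: add_pos_pos)
    then show "\<exists>\<mu> \<delta> M. 1 \<le> \<mu> \<and> 0 < \<delta> \<and> 0 < M \<and>
      (\<forall>x\<ge>0. \<forall>y\<ge>0. dist x y / \<mu> - \<delta> \<le> dist (h x) (h y) \<and> dist (h x) (h y) \<le> \<mu> * dist x y + \<delta>) \<and>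
      (\<forall>y\<ge>0. \<exists>x\<ge>0. dist y (h x) \<le> M)"
      using m hlo hup hs by (intro exI[of _ \<mu>] exI[of _ "\<mu> * (2 * M + \<delta>) + 1"] exI[of _ "\<mu> * (M + \<delta>) + 1"]) auto
  qed
  moreover have "qi_equiv (h \<circ> f) id" unfolding qi_equiv_def
    using bck by (intro exI[of _ "\<mu> * (M + \<delta>)"]) (auto simp: dist_commute)
  moreover have "qi_equiv (f \<circ> h) id" unfolding qi_equiv_def
    using hp by (intro exI[of _ M]) (auto simp: dist_commute)
  ultimately show ?thesis by blast
qed


lemma QI_carrier: "carrier QI_Rplus = qi_class ` {f. is_qi f}"
  unfolding QI_Rplus_def by simp

lemma QI_one: "\<one>\<^bsub>QI_Rplus\<^esub> = qi_class id"
  unfolding QI_Rplus_def by simp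

lemma group_QI: "group QI_Rplus"
proof (rule groupI)
  fix x y assume "x \<in> carrier QI_Rplus" "y \<in> carrier QI_Rplus"
  then obtain f g where "is_qi f" "is_qi g" "x = qi_class f" "y = qi_class g" by (auto simp: QI_carrier)
  then show "x \<otimes>\<^bsub>QI_Rplus\<^esub> y \<in> carrier QI_Rplus"
    by (simp add: mult_class QI_carrier is_qi_comp)
next
  show "\<one>\<^bsub>QI_Rplus\<^esub> \<in> carrier QI_Rplus" by (simp add: QI_one QI_carrier is_qi_id)
next
  fix x y z assume "x \<in> carrier QI_Rplus" "y \<in> carrier QI_Rplus" "z \<in> carrier QI_Rplus"
  then obtain f g k where "is_qi f" "is_qi g" "is_qi k" "x = qi_class f" "y = qi_class g" "z = qi_class k"
    by (auto simp: QI_carrier)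
  then show "x \<otimes>\<^bsub>QI_Rplus\<^esub> y \<otimes>\<^bsub>QI_Rplus\<^esub> z = x \<otimes>\<^bsub>QI_Rplus\<^esub> (y \<otimes>\<^bsub>QI_Rplus\<^esub> z)"
    by (simp add: mult_class is_qi_comp o_assoc)
next
  fix x assume "x \<in> carrier QI_Rplus"
  then obtain f where "is_qi f" "x = qi_class f" by (auto simp: QI_carrier)
  then show "\<one>\<^bsub>QI_Rplus\<^esub> \<otimes>\<^bsub>QI_Rplus\<^esub> x = x"
    by (simp add: QI_one mult_class is_qi_id)
next
  fix x assume "x \<in> carrier QI_Rplus"
  then obtain f where f: "is_qi f" "x = qi_class f" by (auto simp: QI_carrier)
  then obtain h where h: "is_qi h" "qi_equiv (h \<circ> f) id" using quasi_inverse by blast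
  then have "qi_class h \<otimes>\<^bsub>QI_Rplus\<^esub> x = \<one>\<^bsub>QI_Rplus\<^esub>"
    using f by (simp add: mult_class QI_one qi_class_cong)
  moreover have "qi_class h \<in> carrier QI_Rplus" using h by (simp add: QI_carrier)
  ultimately show "\<exists>y\<in>carrier QI_Rplus. y \<otimes>\<^bsub>QI_Rplus\<^esub> x = \<one>\<^bsub>QI_Rplus\<^esub>" by blast
qed



definition P1 :: "(real \<Rightarrow> real) \<Rightarrow> bool" where
  "P1 f \<longleftrightarrow> ((\<lambda>x. f x / x) \<longlongrightarrow> 1) at_top"

lemma P1_eps: "P1 f \<longleftrightarrow> (\<forall>e>0. \<exists>K. \<forall>x\<ge>K. \<bar>f x - x\<bar> \<le> e * x)"
proof
  assume "P1 f"
  then have T: "\<forall>e>0. eventually (\<lambda>x. dist (f x / x) 1 < e) at_top"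
    unfolding P1_def tendsto_iff by blast
  show "\<forall>e>0. \<exists>K. \<forall>x\<ge>K. \<bar>f x - x\<bar> \<le> e * x"
  proof (intro allI impI)
    fix e :: real assume e: "e > 0"
    have "eventually (\<lambda>x. dist (f x / x) 1 < e \<and> x > 0) at_top"
      by (rule eventually_conj[OF T[rule_format, OF e] eventually_gt_at_top])
    then obtain K where K: "\<And>x. x \<ge> K \<Longrightarrow> dist (f x / x) 1 < e \<and> x > 0"
      unfolding eventually_at_top_linorder by blast
    show "\<exists>K. \<forall>x\<ge>K. \<bar>f x - x\<bar> \<le> e * x"
    proof (rule exI[of _ K], intro allI impI)
      fix x assume "x \<ge> K"
      then have a: "dist (f x / x) 1 < e" "x > 0" using K by auto
      have "f x / x - 1 = (f x - x) / x" using a(2) by (simp add: field_simps)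
      then have "\<bar>f x - x\<bar> / x < e" using a by (simp add: dist_real_def)
      then show "\<bar>f x - x\<bar> \<le> e * x" using a(2) by (simp add: divide_less_eq)
    qed
  qed
next
  assume H: "\<forall>e>0. \<exists>K. \<forall>x\<ge>K. \<bar>f x - x\<bar> \<le> e * x"
  show "P1 f" unfolding P1_def tendsto_iff
  proof (intro allI impI)
    fix e :: real assume e: "e > 0"
    obtain K where K: "\<And>x. x \<ge> K \<Longrightarrow> \<bar>f x - x\<bar> \<le> e / 2 * x" using H e
      by (meson half_gt_zero)
    show "eventually (\<lambda>x. dist (f x / x) 1 < e) at_top"
      unfolding eventually_at_top_linorder
    proof (rule exI[of _ "max K 1"], intro allI impI)
      fix x assume x: "x \<ge> max K 1"
      then have a: "\<bar>f x - x\<bar> \<le> e / 2 * x" "x > 0" using K by auto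
      have "f x / x - 1 = (f x - x) / x" using a(2) by (simp add: field_simps)
      then have d: "dist (f x / x) 1 = \<bar>f x - x\<bar> / x" using a(2) by (simp add: dist_real_def abs_divide)
      have "\<bar>f x - x\<bar> / x \<le> e / 2" using a by (simp add: divide_le_eq)
      then show "dist (f x / x) 1 < e" using e d by linarith
    qed
  qed
qed

lemma P1_epsD:
  assumes "P1 f" "e > 0"
  obtains K where "\<And>x. x \<ge> K \<Longrightarrow> \<bar>f x - x\<bar> \<le> e * x"
  using assms P1_eps by blast

lemma P1_epsI:
  assumes "\<And>e. e > 0 \<Longrightarrow> \<exists>K. \<forall>x\<ge>K. \<bar>f x - x\<bar> \<le> e * x"
  shows "P1 f"
  using assms P1_eps by blast

lemma P1_id: "P1 id"
  by (rule P1_epsI) (auto intro!: exI[of _ 0])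

lemma P1_equiv:
  assumes "P1 f" "qi_equiv f g"
  shows "P1 g"
proof (rule P1_epsI)
  fix e :: real assume e: "e > 0"
  obtain C where C: "\<And>x. x \<ge> 0 \<Longrightarrow> dist (f x) (g x) \<le> C" using assms(2) unfolding qi_equiv_def by blast
  obtain K where K: "\<And>x. x \<ge> K \<Longrightarrow> \<bar>f x - x\<bar> \<le> e / 2 * x" using P1_epsD[OF assms(1), of "e/2"] e by auto
  show "\<exists>K. \<forall>x\<ge>K. \<bar>g x - x\<bar> \<le> e * x"
  proof (rule exI[of _ "max K (max 0 (2 * C / e))"], intro allI impI)
    fix x assume x: "x \<ge> max K (max 0 (2 * C / e))"
    have a: "\<bar>f x - x\<bar> \<le> e / 2 * x" "\<bar>f x - g x\<bar> \<le> C" using K C x by (auto simp: dist_real_def)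
    have "2 * C / e \<le> x" using x by auto
    then have "2 * C \<le> x * e" using e by (simp add: divide_le_eq)
    then show "\<bar>g x - x\<bar> \<le> e * x" using a by (simp add: algebra_simps abs_if split: if_splits)
  qed
qed

lemma P1_half:
  assumes "P1 f"
  obtains K where "K \<ge> 0" "\<And>x. x \<ge> K \<Longrightarrow> f x \<ge> x / 2 \<and> f x \<le> 2 * x"
proof -
  obtain K where K: "\<And>x. x \<ge> K \<Longrightarrow> \<bar>f x - x\<bar> \<le> 1 / 2 * x" using P1_epsD[OF assms, of "1/2"] by auto
  show ?thesis
  proof (rule that[of "max K 0"])
    fix x assume "x \<ge> max K 0"
    then have "\<bar>f x - x\<bar> \<le> 1 / 2 * x" "x \<ge> 0" using K by auto
    then show "f x \<ge> x / 2 \<and> f x \<le> 2 * x" by (auto simp: abs_if split: if_splits)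
  qed auto
qed

lemma P1_comp:
  assumes f: "P1 f" and g: "P1 g"
  shows "P1 (f \<circ> g)"
proof (rule P1_epsI)
  fix e :: real assume e: "e > 0"
  obtain K1 where K1: "\<And>x. x \<ge> K1 \<Longrightarrow> \<bar>f x - x\<bar> \<le> e / 4 * x" using P1_epsD[OF f, of "e/4"] e by auto
  obtain K2 where K2: "\<And>x. x \<ge> K2 \<Longrightarrow> \<bar>g x - x\<bar> \<le> e / 2 * x" using P1_epsD[OF g, of "e/2"] e by auto
  obtain K3 where K3: "K3 \<ge> 0" "\<And>x. x \<ge> K3 \<Longrightarrow> g x \<ge> x / 2 \<and> g x \<le> 2 * x" using P1_half[OF g] by blast
  show "\<exists>K. \<forall>x\<ge>K. \<bar>(f \<circ> g) x - x\<bar> \<le> e * x"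
  proof (rule exI[of _ "max K2 (max K3 (2 * \<bar>K1\<bar>))"], intro allI impI)
    fix x assume x: "x \<ge> max K2 (max K3 (2 * \<bar>K1\<bar>))"
    have g3: "g x \<ge> x / 2" "g x \<le> 2 * x" using K3 x by auto
    have "g x \<ge> K1" using g3 x by auto
    then have a: "\<bar>f (g x) - g x\<bar> \<le> e / 4 * g x" using K1 by blast
    have "e / 4 * g x \<le> e / 4 * (2 * x)" using g3 e by (intro mult_left_mono) auto
    moreover have b: "\<bar>g x - x\<bar> \<le> e / 2 * x" using K2 x by auto
    ultimately show "\<bar>(f \<circ> g) x - x\<bar> \<le> e * x" using a by (simp add: abs_if split: if_splits)
  qed
qed



lemma qi_full:
  assumes f: "is_qi f"
  obtains \<mu> \<delta> c where "\<mu> \<ge> 1" "\<delta> > 0" "c \<ge> 0"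
    "\<And>x y. x \<ge> 0 \<Longrightarrow> y \<ge> 0 \<Longrightarrow> dist x y / \<mu> - \<delta> \<le> dist (f x) (f y)"
    "\<And>x y. x \<ge> 0 \<Longrightarrow> y \<ge> 0 \<Longrightarrow> dist (f x) (f y) \<le> \<mu> * dist x y + \<delta>"
    "\<And>x. x \<ge> 0 \<Longrightarrow> f x \<ge> x / \<mu> - c \<and> f x \<le> \<mu> * x + c"
proof -
  from f obtain \<mu> \<delta> M where H: "\<mu> \<ge> 1 \<and> \<delta> > 0 \<and> M > 0 \<and> (\<forall>x\<ge>0. \<forall>y\<ge>0. dist x y / \<mu> - \<delta> \<le> dist (f x) (f y) \<and> dist (f x) (f y) \<le> \<mu> * dist x y + \<delta>) \<and> (\<forall>y\<ge>0. \<exists>x\<ge>0. dist y (f x) \<le> M)"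
    unfolding is_qi_def by blast
  then have m: "\<mu> \<ge> 1" "\<delta> > 0" by auto
  have lo: "\<And>x y. x \<ge> 0 \<Longrightarrow> y \<ge> 0 \<Longrightarrow> dist x y / \<mu> - \<delta> \<le> dist (f x) (f y)" using H by blast
  have up: "\<And>x y. x \<ge> 0 \<Longrightarrow> y \<ge> 0 \<Longrightarrow> dist (f x) (f y) \<le> \<mu> * dist x y + \<delta>" using H by blast
  have fp: "\<And>x. x \<ge> 0 \<Longrightarrow> f x \<ge> 0" using f is_qi_rplus rplusD by blast
  have f0: "f 0 \<ge> 0" using fp by simp
  have b: "f x \<ge> x / \<mu> - (f 0 + \<delta>) \<and> f x \<le> \<mu> * x + (f 0 + \<delta>)" if x: "x \<ge> 0" for x
  proof -
    have l: "x / \<mu> - \<delta> \<le> \<bar>f x - f 0\<bar>" using lo[OF x, of 0] x by (simp add: dist_real_def)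
    have u: "\<bar>f x - f 0\<bar> \<le> \<mu> * x + \<delta>" using up[OF x, of 0] x by (simp add: dist_real_def)
    have "f x \<ge> 0" using fp x by simp
    then show ?thesis using l u f0 by (auto simp: abs_if split: if_splits)
  qed
  show ?thesis
    by (rule that[OF m(1) m(2) _ lo up b]) (use f0 m in auto)
qed

lemma aux: "2 * C \<le> P - Q \<Longrightarrow> (P + Q + 2 * C) / 2 \<le> (P::real)"
  by (simp add: field_simps)

lemma tri: "\<bar>a - c\<bar> \<le> \<bar>a - b\<bar> + \<bar>b - (c::real)\<bar>"
  by linarith

lemma P1_inv:
  assumes f: "P1 f" and h: "is_qi h" and fh: "qi_equiv (f \<circ> h) id"
  shows "P1 h"
proof (rule P1_epsI)
  fix e :: real assume e: "e > 0"
  define e' where "e' = min (1/2) (e/4)"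
  have e': "e' > 0" "e' \<le> 1/2" "e' \<le> e / 4" using e unfolding e'_def by auto
  obtain K1 where K1: "\<And>x. x \<ge> K1 \<Longrightarrow> \<bar>f x - x\<bar> \<le> e' * x" using P1_epsD[OF f e'(1)] by blast
  obtain C where C: "\<And>x. x \<ge> 0 \<Longrightarrow> dist (f (h x)) x \<le> C" using fh unfolding qi_equiv_def by auto
  have C0: "C \<ge> 0" using C[of 0] zero_le_dist[of "f (h 0)" 0] by linarith
  obtain \<mu> \<delta> c where m: "\<mu> \<ge> 1" "c \<ge> 0" and b: "\<And>x. x \<ge> 0 \<Longrightarrow> h x \<ge> x / \<mu> - c \<and> h x \<le> \<mu> * x + c"
    using qi_full[OF h] by metis
  have hp: "\<And>x. x \<ge> 0 \<Longrightarrow> h x \<ge> 0" using h is_qi_rplus rplusD by blast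
  show "\<exists>K. \<forall>x\<ge>K. \<bar>h x - x\<bar> \<le> e * x"
  proof (rule exI[of _ "max (\<mu> * (\<bar>K1\<bar> + c)) (C + 2 * C / e)"], intro allI impI)
    fix y assume y: "y \<ge> max (\<mu> * (\<bar>K1\<bar> + c)) (C + 2 * C / e)"
    have y0: "y \<ge> 0" using y m C0 e by (smt (verit) divide_nonneg_pos mult_nonneg_nonneg)
    have "y / \<mu> \<ge> \<bar>K1\<bar> + c" using y m by (simp add: le_divide_eq mult.commute)
    then have "h y \<ge> K1" using b[OF y0] by linarith
    then have a: "\<bar>f (h y) - h y\<bar> \<le> e' * h y" using K1 by blast
    have c: "\<bar>f (h y) - y\<bar> \<le> C" using C[OF y0] by (simp add: dist_real_def)
    have hy: "h y \<ge> 0" using hp y0 by blast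
    have "e' * h y \<le> 1/2 * h y" using e' hy by (intro mult_right_mono) auto
    then have hb: "h y \<le> 2 * (y + C)" using a c by (simp add: abs_if split: if_splits)
    have "e' * h y \<le> e / 4 * (2 * (y + C))"
      using e' hy hb y0 C0 by (intro mult_mono) auto
    moreover have "e / 4 * (2 * (y + C)) = e / 2 * (y + C)" by (simp add: field_simps)
    ultimately have E: "e' * h y \<le> e / 2 * (y + C)" by linarith
    have a': "-(e' * h y) \<le> f (h y) - h y" "f (h y) - h y \<le> e' * h y" using a by (auto simp: abs_le_iff)
    have c': "-C \<le> f (h y) - y" "f (h y) - y \<le> C" using c by (auto simp: abs_le_iff)
    have d: "\<bar>h y - y\<bar> \<le> e / 2 * (y + C) + C" unfolding abs_le_iff using a' c' E by linarith
    have "2 * C / e \<le> y - C" using y by auto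
    then have "2 * C \<le> (y - C) * e" using e by (simp add: divide_le_eq)
    moreover have "(y - C) * e = e * y - e * C" by (simp add: algebra_simps)
    ultimately have H1: "2 * C \<le> e * y - e * C" by simp
    have "e / 2 * (y + C) + C = (e * y + e * C + 2 * C) / 2" by (simp add: field_simps)
    then have "e / 2 * (y + C) + C \<le> e * y" using aux[OF H1] by linarith
    then show "\<bar>h y - y\<bar> \<le> e * y" using d by linarith
  qed
qed

lemma P1_conj:
  assumes f: "P1 f" "is_qi f" and g: "is_qi g" and k: "is_qi k" and gk: "qi_equiv (g \<circ> k) id"
  shows "P1 (\<lambda>x. g (f (k x)))"
proof (rule P1_epsI)
  fix e :: real assume e: "e > 0"
  obtain \<mu> \<delta> c where m: "\<mu> \<ge> 1" "\<delta> > 0" and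
    up: "\<And>x y. x \<ge> 0 \<Longrightarrow> y \<ge> 0 \<Longrightarrow> dist (g x) (g y) \<le> \<mu> * dist x y + \<delta>"
    using qi_full[OF g] by metis
  obtain \<mu>k \<delta>k ck where mk: "\<mu>k \<ge> 1" "ck \<ge> 0" and bk: "\<And>x. x \<ge> 0 \<Longrightarrow> k x \<ge> x / \<mu>k - ck \<and> k x \<le> \<mu>k * x + ck"
    using qi_full[OF k] by metis
  obtain C where C: "\<And>x. x \<ge> 0 \<Longrightarrow> dist (g (k x)) x \<le> C" using gk unfolding qi_equiv_def by auto
  have C0: "C \<ge> 0" using C[of 0] zero_le_dist[of "g (k 0)" 0] by linarith
  define B where "B = \<mu>k + ck"
  have B: "B \<ge> 1" using mk unfolding B_def by simp
  define e' where "e' = e / (2 * \<mu> * B)"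
  have e': "e' > 0" using e m B unfolding e'_def by simp
  have e'B: "\<mu> * e' * B = e / 2" using m B unfolding e'_def by (simp add: field_simps)
  obtain K1 where K1: "\<And>x. x \<ge> K1 \<Longrightarrow> \<bar>f x - x\<bar> \<le> e' * x" using P1_epsD[OF f(1) e'] by blast
  have kp: "\<And>x. x \<ge> 0 \<Longrightarrow> k x \<ge> 0" using k is_qi_rplus rplusD by blast
  have fp: "\<And>x. x \<ge> 0 \<Longrightarrow> f x \<ge> 0" using f is_qi_rplus rplusD by blast
  show "\<exists>K. \<forall>x\<ge>K. \<bar>g (f (k x)) - x\<bar> \<le> e * x"
  proof (rule exI[of _ "max 1 (max (\<mu>k * (\<bar>K1\<bar> + ck)) (2 * (\<delta> + C) / e))"], intro allI impI)
    fix x assume x: "x \<ge> max 1 (max (\<mu>k * (\<bar>K1\<bar> + ck)) (2 * (\<delta> + C) / e))"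
    have x0: "x \<ge> 0" "x \<ge> 1" using x by auto
    have "x / \<mu>k \<ge> \<bar>K1\<bar> + ck" using x mk by (simp add: le_divide_eq mult.commute)
    then have "k x \<ge> K1" using bk[OF x0(1)] by linarith
    then have a: "\<bar>f (k x) - k x\<bar> \<le> e' * k x" using K1 by blast
    have kx: "k x \<ge> 0" "k x \<le> B * x"
    proof -
      show "k x \<ge> 0" using kp x0 by blast
      have "ck * 1 \<le> ck * x" using mk x0 by (intro mult_left_mono) auto
      then have "ck \<le> ck * x" by simp
      then show "k x \<le> B * x" using bk[OF x0(1)] unfolding B_def by (simp add: algebra_simps)
    qed
    have fk: "f (k x) \<ge> 0" using fp kx by blast
    have p1: "\<bar>g (f (k x)) - g (k x)\<bar> \<le> \<mu> * \<bar>f (k x) - k x\<bar> + \<delta>"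
      using up[OF fk kx(1)] by (simp add: dist_real_def)
    have p2: "\<mu> * \<bar>f (k x) - k x\<bar> \<le> \<mu> * (e' * (B * x))"
      using a kx e' m by (intro mult_left_mono order.trans[OF a] mult_left_mono) auto
    have p3: "\<mu> * (e' * (B * x)) = e / 2 * x" using e'B by (simp add: algebra_simps)
    have p: "\<bar>g (f (k x)) - g (k x)\<bar> \<le> e / 2 * x + \<delta>" using p1 p2 p3 by linarith
    have q: "\<bar>g (k x) - x\<bar> \<le> C" using C[OF x0(1)] by (simp add: dist_real_def)
    have "2 * (\<delta> + C) / e \<le> x" using x by auto
    then have "2 * (\<delta> + C) \<le> x * e" using e by (simp add: divide_le_eq)
    then have r: "2 * (\<delta> + C) \<le> e * x" by (simp add: mult.commute)
    have t: "\<bar>g (f (k x)) - x\<bar> \<le> \<bar>g (f (k x)) - g (k x)\<bar> + \<bar>g (k x) - x\<bar>" by (rule tri)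
    have "e / 2 * x + \<delta> + C \<le> e * x" using r by simp
    then show "\<bar>g (f (k x)) - x\<bar> \<le> e * x" using p q t by linarith
  qed
qed

lemma N_iff: "A \<in> N_Rplus \<longleftrightarrow> (\<exists>f. is_qi f \<and> P1 f \<and> A = qi_class f)"
  unfolding N_Rplus_def P1_def by blast

lemma N_mem_P1:
  assumes "is_qi f" "qi_class f \<in> N_Rplus"
  shows "P1 f"
proof -
  obtain f' where f': "is_qi f'" "P1 f'" "qi_class f = qi_class f'" using assms(2) N_iff by blast
  have "f \<in> qi_class f'" using f'(3) qi_class_self is_qi_rplus assms(1) by metis
  then show ?thesis using P1_equiv f'(2) qi_class_mem by blast
qed

lemma QI_inv:
  assumes f: "is_qi f"
  obtains h where "is_qi h" "inv\<^bsub>QI_Rplus\<^esub> (qi_class f) = qi_class h"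
    "qi_equiv (h \<circ> f) id" "qi_equiv (f \<circ> h) id"
proof -
  obtain h where h: "is_qi h" "qi_equiv (h \<circ> f) id" "qi_equiv (f \<circ> h) id" using quasi_inverse f by blast
  have "qi_class h \<otimes>\<^bsub>QI_Rplus\<^esub> qi_class f = \<one>\<^bsub>QI_Rplus\<^esub>"
    using h f by (simp add: mult_class QI_one qi_class_cong)
  then have "inv\<^bsub>QI_Rplus\<^esub> (qi_class f) = qi_class h"
    by (rule group.inv_equality[OF group_QI]) (use f h in \<open>auto simp: QI_carrier\<close>)
  then show ?thesis using that h by blast
qed

lemma N_normal: "N_Rplus \<lhd> QI_Rplus"
proof -
  have grp: "group QI_Rplus" by (rule group_QI)
  have sub: "subgroup N_Rplus QI_Rplus"
  proof (rule group.subgroupI[OF grp])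
    show "N_Rplus \<subseteq> carrier QI_Rplus" unfolding QI_carrier N_iff by (auto simp: N_iff)
    show "N_Rplus \<noteq> {}" using N_iff is_qi_id P1_id by blast
  next
    fix a assume "a \<in> N_Rplus"
    then obtain f where f: "is_qi f" "P1 f" "a = qi_class f" using N_iff by blast
    obtain h where h: "is_qi h" "inv\<^bsub>QI_Rplus\<^esub> a = qi_class h" "qi_equiv (f \<circ> h) id"
      using QI_inv[OF f(1)] f(3) by metis
    have "P1 h" by (rule P1_inv[OF f(2) h(1) h(3)])
    then show "inv\<^bsub>QI_Rplus\<^esub> a \<in> N_Rplus" using h N_iff by blast
  next
    fix a b assume "a \<in> N_Rplus" "b \<in> N_Rplus"
    then obtain f g where fg: "is_qi f" "P1 f" "a = qi_class f" "is_qi g" "P1 g" "b = qi_class g"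
      using N_iff by metis
    then show "a \<otimes>\<^bsub>QI_Rplus\<^esub> b \<in> N_Rplus"
      using N_iff mult_class is_qi_comp P1_comp by metis
  qed
  show ?thesis
  proof (subst group.normal_inv_iff[OF grp], intro conjI sub ballI)
    fix x n assume x: "x \<in> carrier QI_Rplus" and n: "n \<in> N_Rplus"
    obtain g where g: "is_qi g" "x = qi_class g" using x by (auto simp: QI_carrier)
    obtain f where f: "is_qi f" "P1 f" "n = qi_class f" using n N_iff by blast
    obtain k where k: "is_qi k" "inv\<^bsub>QI_Rplus\<^esub> x = qi_class k" "qi_equiv (g \<circ> k) id"
      using QI_inv[OF g(1)] g(2) by metis
    have eq: "x \<otimes>\<^bsub>QI_Rplus\<^esub> n \<otimes>\<^bsub>QI_Rplus\<^esub> inv\<^bsub>QI_Rplus\<^esub> x = qi_class (\<lambda>y. g (f (k y)))"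
    proof -
      have "x \<otimes>\<^bsub>QI_Rplus\<^esub> n = qi_class (g \<circ> f)" using g f mult_class by simp
      then have "x \<otimes>\<^bsub>QI_Rplus\<^esub> n \<otimes>\<^bsub>QI_Rplus\<^esub> inv\<^bsub>QI_Rplus\<^esub> x = qi_class ((g \<circ> f) \<circ> k)"
        using k(2) mult_class[OF is_qi_comp[OF g(1) f(1)] k(1)] by simp
      then show ?thesis by (simp add: comp_def)
    qed
    have "is_qi (\<lambda>y. g (f (k y)))" using is_qi_comp[OF is_qi_comp[OF g(1) f(1)] k(1)] by (simp add: comp_def)
    moreover have "P1 (\<lambda>y. g (f (k y)))" by (rule P1_conj[OF f(2) f(1) g(1) k(1) k(3)])
    ultimately show "x \<otimes>\<^bsub>QI_Rplus\<^esub> n \<otimes>\<^bsub>QI_Rplus\<^esub> inv\<^bsub>QI_Rplus\<^esub> x \<in> N_Rplus"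
      using eq N_iff by blast
  qed
qed



primrec sq :: "(real \<Rightarrow> bool) \<Rightarrow> real \<Rightarrow> nat \<Rightarrow> real" where
  "sq Q B 0 = (SOME x. x \<ge> 1 \<and> Q x)"
| "sq Q B (Suc n) = (SOME x. x \<ge> B * sq Q B n \<and> x \<ge> 1 \<and> Q x)"

lemma sq_props:
  assumes "\<forall>K. \<exists>x\<ge>K. x \<ge> 1 \<and> Q x"
  shows "sq Q B n \<ge> 1 \<and> Q (sq Q B n)" "sq Q B (Suc n) \<ge> B * sq Q B n"
proof -
  have ex0: "\<exists>x. x \<ge> 1 \<and> Q x" using assms by blast
  have exS: "\<exists>x. x \<ge> B * sq Q B m \<and> x \<ge> 1 \<and> Q x" for m
    using assms by blast
  show "sq Q B n \<ge> 1 \<and> Q (sq Q B n)"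
  proof (cases n)
    case 0
    then show ?thesis using someI_ex[OF ex0] by simp
  next
    case (Suc m)
    then show ?thesis using someI_ex[OF exS[of m]] by simp
  qed
  show "sq Q B (Suc n) \<ge> B * sq Q B n" using someI_ex[OF exS[of n]] by simp
qed

lemma infdist_lip: "\<bar>infdist x S - infdist y S\<bar> \<le> \<bar>x - (y::real)\<bar>"
  using infdist_triangle_abs[of x S y] by (simp add: dist_real_def)

lemma lin_aux1: "\<bar>a - b\<bar> \<le> \<bar>x - y\<bar> \<Longrightarrow>
  \<bar>x - y\<bar> / 2 - 1 \<le> \<bar>(x - y) + (a - b) / 2\<bar>"
  for a b x y :: real
  by (cases "x \<ge> y"; cases "a \<ge> b"; cases "(x - y) + (a - b) / 2 \<ge> 0") (auto simp: field_simps)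

lemma lin_aux2: "\<bar>a - b\<bar> \<le> \<bar>x - y\<bar> \<Longrightarrow>
  \<bar>(x - y) + (a - b) / 2\<bar> \<le> 2 * \<bar>x - y\<bar> + (1::real)"
  for a b x y :: real
  by (cases "x \<ge> y"; cases "a \<ge> b"; cases "(x - y) + (a - b) / 2 \<ge> 0") (auto simp: field_simps)

lemma lin_aux: "\<bar>a - b\<bar> \<le> \<bar>x - y\<bar> \<Longrightarrow>
  \<bar>x - y\<bar> / 2 - 1 \<le> \<bar>(x - y) + (a - b) / 2\<bar> \<and> \<bar>(x - y) + (a - b) / 2\<bar> \<le> 2 * \<bar>x - y\<bar> + (1::real)"
  using lin_aux1 lin_aux2 by blast

lemma bump_qi:
  assumes "(0::real) \<in> S"
  shows "is_qi (\<lambda>x. x + infdist x S / 2)"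
proof -
  define g where "g = (\<lambda>x. x + infdist x S / 2)"
  have gp: "\<forall>x::real\<ge>0. 0 \<le> g x"
  proof (intro allI impI)
    fix x :: real assume "x \<ge> 0" then show "0 \<le> g x" using infdist_nonneg[of x S] unfolding g_def by simp
  qed
  have L: "\<forall>x::real\<ge>0. \<forall>y::real\<ge>0. dist x y / 2 - 1 \<le> dist (g x) (g y) \<and> dist (g x) (g y) \<le> 2 * dist x y + 1"
  proof (intro allI impI)
    fix x y :: real
    have l: "\<bar>infdist x S - infdist y S\<bar> \<le> \<bar>x - y\<bar>" by (rule infdist_lip)
    have e: "g x - g y = (x - y) + (infdist x S - infdist y S) / 2" unfolding g_def by simp
    show "dist x y / 2 - 1 \<le> dist (g x) (g y) \<and> dist (g x) (g y) \<le> 2 * dist x y + 1"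
      unfolding dist_real_def e using lin_aux[OF l] by simp
  qed
  have g0: "g 0 = 0" unfolding g_def using assms by simp
  have cont: "continuous_on A g" for A unfolding g_def by (intro continuous_intros) auto
  have Su: "\<forall>y::real\<ge>0. \<exists>x\<ge>0. dist y (g x) \<le> 1"
  proof (intro allI impI)
    fix y :: real assume y: "y \<ge> 0"
    have "g y \<ge> y" unfolding g_def using infdist_nonneg[of y S] by simp
    then obtain x where "0 \<le> x" "x \<le> y" "g x = y" using IVT'[of g 0 y y] y g0 cont by auto
    then show "\<exists>x\<ge>0. dist y (g x) \<le> 1" by (intro exI[of _ x]) simp
  qed
  have "is_qi g" unfolding is_qi_def rplus_map_def
    by (intro conjI exI[of _ "2::real"] exI[of _ "1::real"]) (use gp L Su in simp_all)
  then show ?thesis unfolding g_def .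
qed



lemma dmc: "d \<noteq> 0 \<Longrightarrow> a / (b * d) * d = a / (b::real)"
  by (cases "b = 0") (simp_all add: field_simps)

lemma key:
  assumes f: "is_qi f"
    and H: "\<And>g. is_qi g \<Longrightarrow> \<exists>h. P1 h \<and> qi_equiv (f \<circ> g) (h \<circ> (g \<circ> f))"
  shows "P1 f"
proof (rule ccontr)
  assume nP: "\<not> P1 f"
  have "\<not> (\<forall>e>0. \<exists>K. \<forall>x\<ge>K. \<bar>f x - x\<bar> \<le> e * x)" using nP P1_eps by simp
  then obtain e0 where e0: "e0 > 0" and bad0: "\<not> (\<exists>K. \<forall>x\<ge>K. \<bar>f x - x\<bar> \<le> e0 * x)" by blast
  define e where "e = min e0 (1/2)"
  have e: "e > 0" "e \<le> 1/2" "e \<le> e0" using e0 unfolding e_def by auto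
  define Q where "Q = (\<lambda>x. e * x < \<bar>f x - x\<bar>)"
  have Qex: "\<forall>K. \<exists>x\<ge>K. x \<ge> 1 \<and> Q x"
  proof
    fix K :: real
    have "\<not> (\<forall>x\<ge>max K 1. \<bar>f x - x\<bar> \<le> e0 * x)" using bad0 by blast
    then obtain x where x: "x \<ge> max K 1" "\<not> \<bar>f x - x\<bar> \<le> e0 * x" by blast
    have "e * x \<le> e0 * x" using x e by (intro mult_right_mono) auto
    then have "Q x" using x unfolding Q_def by linarith
    then show "\<exists>x\<ge>K. x \<ge> 1 \<and> Q x" using x by (intro exI[of _ x]) auto
  qed
  obtain \<mu> \<delta> c where m: "\<mu> \<ge> 1" "\<delta> > 0" "c \<ge> 0" and
    lo: "\<And>x y. x \<ge> 0 \<Longrightarrow> y \<ge> 0 \<Longrightarrow> dist x y / \<mu> - \<delta> \<le> dist (f x) (f y)" and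
    b: "\<And>x. x \<ge> 0 \<Longrightarrow> f x \<ge> x / \<mu> - c \<and> f x \<le> \<mu> * x + c"
    using qi_full[OF f] by metis
  have fp: "\<And>x. x \<ge> 0 \<Longrightarrow> f x \<ge> 0" using f is_qi_rplus rplusD by blast
  define B where "B = 2 * (\<mu> + c) + \<mu> * (2 + c) + 2"
  have B: "B \<ge> 2" "B \<ge> 2 * (\<mu> + c)" "B \<ge> \<mu> * (2 + c)" using m unfolding B_def by auto
  define xs where "xs = sq Q B"
  have xs1: "xs n \<ge> 1" "Q (xs n)" for n using sq_props(1)[OF Qex] unfolding xs_def by auto
  have xsS: "xs (Suc n) \<ge> B * xs n" for n using sq_props(2)[OF Qex] unfolding xs_def by auto
  have mono: "xs n \<le> xs (Suc n)" for n
  proof -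
    have "1 * xs n \<le> B * xs n" using B xs1[of n] by (intro mult_right_mono) auto
    then show ?thesis using xsS[of n] by simp
  qed
  have xsm: "n \<le> m \<Longrightarrow> xs n \<le> xs m" for n m using lift_Suc_mono_le[of xs, OF mono] by blast
  have gtB: "n < m \<Longrightarrow> B * xs n \<le> xs m" for n m using xsS[of n] xsm[of "Suc n" m] by simp
  have xsn: "xs n \<ge> real n" for n
  proof (induction n)
    case 0 then show ?case using xs1[of 0] by simp
  next
    case (Suc n)
    have "2 * xs n \<le> B * xs n" using B xs1[of n] by (intro mult_right_mono) auto
    then show ?case using Suc xsS[of n] xs1[of n] by linarith
  qed
  define S where "S = insert 0 (range (\<lambda>n. f (xs n)))"
  define g where "g = (\<lambda>x. x + infdist x S / 2)"
  have gq: "is_qi g" unfolding g_def by (rule bump_qi) (simp add: S_def)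
  have gf: "g (f (xs n)) = f (xs n)" for n unfolding g_def S_def by simp
  have far: "infdist (xs n) S \<ge> e * xs n" for n
  proof -
    let ?x = "xs n"
    have x1: "?x \<ge> 1" by (rule xs1)
    have ex: "e * ?x \<le> ?x / 2" using e x1 by (simp add: mult_right_mono)
    have "e * ?x \<le> dist ?x s" if s: "s \<in> S" for s
    proof -
      consider "s = 0" | m where "s = f (xs m)" using s unfolding S_def by blast
      then show ?thesis
      proof cases
        case 1
        then show ?thesis using ex x1 by (simp add: dist_real_def)
      next
        case (2 m)
        note sm = this
        consider "m = n" | "m < n" | "n < m" by linarith
        then show ?thesis
        proof cases
          case 1
          then show ?thesis using xs1(2)[of n] sm unfolding Q_def by (simp add: dist_real_def abs_minus_commute)
        next
          case 3
          have a: "xs m \<ge> B * ?x" using gtB[OF 3] .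
          have "\<mu> * (2 + c) * ?x \<le> B * ?x" using B x1 by (intro mult_right_mono) auto
          then have "\<mu> * ((2 + c) * ?x) \<le> xs m" using a by (simp add: algebra_simps)
          then have "(2 + c) * ?x \<le> xs m / \<mu>" using m by (simp add: le_divide_eq mult.commute)
          moreover have "f (xs m) \<ge> xs m / \<mu> - c" using b[of "xs m"] xs1[of m] by simp
          moreover have "c \<le> c * ?x" using m x1 mult_left_mono[of 1 ?x c] by simp
          ultimately have fm: "f (xs m) \<ge> 2 * ?x" by (simp add: algebra_simps)
          show ?thesis unfolding sm dist_real_def using fm ex x1 by linarith
        next
          case 2
          have a: "xs n \<ge> B * xs m" using gtB[OF 2] .
          have xm: "xs m \<ge> 1" by (rule xs1)
          have "c \<le> c * xs m" using m xm mult_left_mono[of 1 "xs m" c] by simp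
          then have "f (xs m) \<le> (\<mu> + c) * xs m" using b[of "xs m"] xm by (simp add: algebra_simps)
          moreover have "2 * (\<mu> + c) * xs m \<le> B * xs m" using B xm by (intro mult_right_mono) auto
          then have "2 * ((\<mu> + c) * xs m) \<le> B * xs m" by (simp only: mult.assoc)
          ultimately have fm: "f (xs m) \<le> ?x / 2" using a by linarith
          show ?thesis unfolding sm dist_real_def using fm ex x1 by linarith
        qed
      qed
    qed
    moreover have "S \<noteq> {}" unfolding S_def by simp
    ultimately show ?thesis unfolding infdist_notempty[OF \<open>S \<noteq> {}\<close>]
      by (intro cINF_greatest) auto
  qed
  obtain h where h: "P1 h" "qi_equiv (f \<circ> g) (h \<circ> (g \<circ> f))" using H[OF gq] by blast
  obtain C where C: "\<And>x. x \<ge> 0 \<Longrightarrow> dist (f (g x)) (h (g (f x))) \<le> C" using h(2) unfolding qi_equiv_def by auto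
  define \<eta> where "\<eta> = e / (4 * \<mu> * (\<mu> + c))"
  have \<eta>: "\<eta> > 0" using e m unfolding \<eta>_def by simp
  obtain K where K: "\<And>u. u \<ge> K \<Longrightarrow> \<bar>h u - u\<bar> \<le> \<eta> * u" using P1_epsD[OF h(1) \<eta>] by blast
  define M where "M = max (\<mu> * (\<bar>K\<bar> + c)) (4 * \<mu> * (\<delta> + C) / e)"
  define n where "n = nat \<lceil>M\<rceil> + 1"
  define x where "x = xs n"
  have "M \<le> real (nat \<lceil>M\<rceil>)" by (rule real_nat_ceiling_ge)
  then have xM: "x > M" using xsn[of n] unfolding n_def x_def by simp
  have x1: "x \<ge> 1" unfolding x_def by (rule xs1)
  have "x / \<mu> \<ge> \<bar>K\<bar> + c" using xM m unfolding M_def by (simp add: le_divide_eq mult.commute)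
  then have fK: "f x \<ge> K" using b[of x] x1 by linarith
  have fx0: "f x \<ge> 0" using fp x1 by simp
  have "c \<le> c * x" using m x1 mult_left_mono[of 1 x c] by simp
  then have fxu: "f x \<le> (\<mu> + c) * x" using b[of x] x1 by (simp add: algebra_simps)
  define w where "w = e * x / (4 * \<mu>)"
  have "\<eta> * f x \<le> \<eta> * ((\<mu> + c) * x)" using \<eta> fxu by (intro mult_left_mono) auto
  also have "\<eta> * ((\<mu> + c) * x) = w"
  proof -
    have ne: "\<mu> + c \<noteq> 0" using m by auto
    have "\<eta> * ((\<mu> + c) * x) = (\<eta> * (\<mu> + c)) * x" by (simp add: mult.assoc)
    also have "\<eta> * (\<mu> + c) = e / (4 * \<mu>)" unfolding \<eta>_def using dmc[OF ne, of e "4 * \<mu>"] by simp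
    finally show ?thesis unfolding w_def by simp
  qed
  finally have A1: "\<bar>h (f x) - f x\<bar> \<le> w" using K[OF fK] by linarith
  have A2: "\<bar>f (g x) - h (f x)\<bar> \<le> C" using C[of x] x1 gf[of n] unfolding x_def by (simp add: dist_real_def)
  have A: "\<bar>f (g x) - f x\<bar> \<le> C + w" using A1 A2 tri[of "f (g x)" "f x" "h (f x)"] by linarith
  have gx: "g x - x \<ge> e * x / 2" using far[of n] unfolding g_def x_def by simp
  have "e * x \<ge> 0" using e x1 by simp
  then have gx0: "g x \<ge> 0" using gx x1 by linarith
  have "dist (g x) x / \<mu> - \<delta> \<le> dist (f (g x)) (f x)" using lo[OF gx0] x1 by simp
  moreover have "e * x / 2 / \<mu> \<le> dist (g x) x / \<mu>"
  proof -
    have "e * x / 2 \<le> dist (g x) x" unfolding dist_real_def using gx by linarith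
    then show ?thesis using m by (intro divide_right_mono) auto
  qed
  moreover have "e * x / 2 / \<mu> = 2 * w" unfolding w_def using m by (simp add: field_simps)
  ultimately have "2 * w - \<delta> \<le> C + w" using A by (simp add: dist_real_def)
  then have wle: "w \<le> \<delta> + C" by simp
  have "4 * \<mu> * (\<delta> + C) / e < x" using xM unfolding M_def by simp
  then have "4 * \<mu> * (\<delta> + C) < x * e" using e by (simp add: divide_less_eq)
  then have "\<delta> + C < w" unfolding w_def using m by (simp add: field_simps)
  then show False using wle by simp
qed



theorem mainTheorem7:
  shows "N_Rplus \<lhd> QI_Rplus \<and>
         group_center (QI_Rplus Mod N_Rplus) = {\<one>\<^bsub>QI_Rplus Mod N_Rplus\<^esub>}"
proof -
  have nrm: "N_Rplus \<lhd> QI_Rplus" by (rule N_normal)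
  interpret nm: normal N_Rplus QI_Rplus by (rule nrm)
  have grp: "group (QI_Rplus Mod N_Rplus)" by (rule nm.factorgroup_is_group)
  interpret fg: group "QI_Rplus Mod N_Rplus" by (rule grp)
  have one: "\<one>\<^bsub>QI_Rplus Mod N_Rplus\<^esub> = N_Rplus" by (simp add: FactGroup_def)
  have "group_center (QI_Rplus Mod N_Rplus) = {N_Rplus}"
  proof
    have "N_Rplus \<in> carrier (QI_Rplus Mod N_Rplus)" using fg.one_closed one by simp
    moreover have "\<forall>x \<in> carrier (QI_Rplus Mod N_Rplus).
        N_Rplus \<otimes>\<^bsub>QI_Rplus Mod N_Rplus\<^esub> x = x \<otimes>\<^bsub>QI_Rplus Mod N_Rplus\<^esub> N_Rplus"
      using fg.l_one fg.r_one one by simp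
    ultimately show "{N_Rplus} \<subseteq> group_center (QI_Rplus Mod N_Rplus)"
      unfolding group_center_def by blast
  next
    show "group_center (QI_Rplus Mod N_Rplus) \<subseteq> {N_Rplus}"
    proof
      fix z assume z: "z \<in> group_center (QI_Rplus Mod N_Rplus)"
      then have zc: "z \<in> rcosets\<^bsub>QI_Rplus\<^esub> N_Rplus"
        and comm: "\<And>y. y \<in> rcosets\<^bsub>QI_Rplus\<^esub> N_Rplus \<Longrightarrow> set_mult QI_Rplus z y = set_mult QI_Rplus y z"
        unfolding group_center_def FactGroup_def by auto
      obtain A where A: "A \<in> carrier QI_Rplus" "z = N_Rplus #>\<^bsub>QI_Rplus\<^esub> A"
        using zc unfolding RCOSETS_def by auto
      obtain f where f: "is_qi f" "A = qi_class f" using A(1) by (auto simp: QI_carrier)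
      have "P1 f"
      proof (rule key[OF f(1)])
        fix g assume g: "is_qi g"
        let ?B = "qi_class g"
        have Bc: "?B \<in> carrier QI_Rplus" using g by (simp add: QI_carrier)
        have "N_Rplus #>\<^bsub>QI_Rplus\<^esub> ?B \<in> rcosets\<^bsub>QI_Rplus\<^esub> N_Rplus" using Bc unfolding RCOSETS_def by auto
        then have "set_mult QI_Rplus z (N_Rplus #>\<^bsub>QI_Rplus\<^esub> ?B) = set_mult QI_Rplus (N_Rplus #>\<^bsub>QI_Rplus\<^esub> ?B) z"
          by (rule comm)
        then have eq: "N_Rplus #>\<^bsub>QI_Rplus\<^esub> (A \<otimes>\<^bsub>QI_Rplus\<^esub> ?B) = N_Rplus #>\<^bsub>QI_Rplus\<^esub> (?B \<otimes>\<^bsub>QI_Rplus\<^esub> A)"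
          using A nm.rcos_sum Bc by simp
        have "A \<otimes>\<^bsub>QI_Rplus\<^esub> ?B \<in> N_Rplus #>\<^bsub>QI_Rplus\<^esub> (A \<otimes>\<^bsub>QI_Rplus\<^esub> ?B)"
          using group.rcos_self[OF group_QI _ nm.subgroup_axioms] A(1) Bc by (simp add: group.subgroup_self)
        then have "A \<otimes>\<^bsub>QI_Rplus\<^esub> ?B \<in> N_Rplus #>\<^bsub>QI_Rplus\<^esub> (?B \<otimes>\<^bsub>QI_Rplus\<^esub> A)" using eq by simp
        then obtain n where n: "n \<in> N_Rplus" "A \<otimes>\<^bsub>QI_Rplus\<^esub> ?B = n \<otimes>\<^bsub>QI_Rplus\<^esub> (?B \<otimes>\<^bsub>QI_Rplus\<^esub> A)"
          unfolding r_coset_def by auto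
        obtain h where h: "is_qi h" "P1 h" "n = qi_class h" using n(1) N_iff by blast
        have "qi_class (f \<circ> g) = qi_class (h \<circ> (g \<circ> f))"
          using n(2) f g h by (simp add: mult_class is_qi_comp)
        moreover have "f \<circ> g \<in> qi_class (f \<circ> g)"
          by (rule qi_class_self[OF is_qi_rplus[OF is_qi_comp[OF f(1) g]]])
        ultimately have "f \<circ> g \<in> qi_class (h \<circ> (g \<circ> f))" by simp
        then have "qi_equiv (h \<circ> (g \<circ> f)) (f \<circ> g)" using qi_class_mem by blast
        then show "\<exists>h. P1 h \<and> qi_equiv (f \<circ> g) (h \<circ> (g \<circ> f))" using h(2) qi_equiv_sym by blast
      qed
      then have "A \<in> N_Rplus" using f N_iff by blast
      then have "z = N_Rplus" using A(2) subgroup.rcos_const[OF nm.subgroup_axioms group_QI] by simp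
      then show "z \<in> {N_Rplus}" by simp
    qed
  qed
  then show ?thesis using nrm one by simp
qed



end
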